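(* (a) Let $H$ be the graph obtained from the cycle $C_5$ by attaching one pendant edge. Then $\chi_i(H)=\chi_{i,2}(H)=4$ and $\chi_{i,1}(H)=5$. (b) For every $n\ge 1$, $\chi_{i,1}(K_{n,n})=2n$.
   Context: An incidence of a graph $G$ is a pair $(v,e)$ with $v\in e\in E(G)$; incidences $(v,e),(u,f)$ are adjacent if $v=u$, or $e=f$, or $vu\in\{e,f\}$; an incidence coloring gives adjacent incidences distinct colors; $\chi_i(G)$ is the least number of colors of an incidence coloring. For an incidence coloring $c$, $S^1_c(v)=\{c(u,uv):uv\in E(G)\}$. A $(k,p)$-incidence coloring is an incidence coloring with at most $k$ colors such that $|S^1_c(v)|\le p$ for every vertex $v$; $\chi_{i,p}(G)$ is the least $k$ for which $G$ admits a $(k,p)$-incidence coloring. *)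

theory Defs
  imports Main
begin

text \<open>A simple graph is given by a vertex set V and an edge set E of 2-element subsets of V.
  Colours are natural numbers.\<close>

definition incidences :: "'a set set \<Rightarrow> ('a \<times> 'a set) set" where
  "incidences E = {(v, e). e \<in> E \<and> v \<in> e}"

definition inc_adj :: "('a \<times> 'a set) \<Rightarrow> ('a \<times> 'a set) \<Rightarrow> bool" where
  "inc_adj a b \<longleftrightarrow> (case a of (v, e) \<Rightarrow> case b of (u, f) \<Rightarrow>
      v = u \<or> e = f \<or> {v, u} = e \<or> {v, u} = f)"

definition incidence_coloring :: "'a set set \<Rightarrow> ('a \<times> 'a set \<Rightarrow> nat) \<Rightarrow> bool" where
  "incidence_coloring E c \<longleftrightarrow>
     (\<forall>a\<in>incidences E. \<forall>b\<in>incidences E. a \<noteq> b \<and> inc_adj a b \<longrightarrow> c a \<noteq> c b)"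

definition S1 :: "'a set set \<Rightarrow> ('a \<times> 'a set \<Rightarrow> nat) \<Rightarrow> 'a \<Rightarrow> nat set" where
  "S1 E c v = {c (u, {u, v}) | u. {u, v} \<in> E}"

definition kp_incidence_coloring ::
  "'a set \<Rightarrow> 'a set set \<Rightarrow> nat \<Rightarrow> nat \<Rightarrow> ('a \<times> 'a set \<Rightarrow> nat) \<Rightarrow> bool" where
  "kp_incidence_coloring V E k p c \<longleftrightarrow>
     incidence_coloring E c \<and> card (c ` incidences E) \<le> k \<and> (\<forall>v\<in>V. card (S1 E c v) \<le> p)"

definition chi_i :: "'a set set \<Rightarrow> nat" where
  "chi_i E = (LEAST k. \<exists>c. incidence_coloring E c \<and> card (c ` incidences E) \<le> k)"

definition chi_ip :: "'a set \<Rightarrow> 'a set set \<Rightarrow> nat \<Rightarrow> nat" where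
  "chi_ip V E p = (LEAST k. \<exists>c. kp_incidence_coloring V E k p c)"

definition H_V :: "nat set" where "H_V = {0..5}"
definition H_E :: "nat set set" where
  "H_E = {{i, (i + 1) mod 5} | i. i < 5} \<union> {{0, 5}}"

definition K_V :: "nat \<Rightarrow> nat set" where "K_V n = {0..<2 * n}"
definition K_E :: "nat \<Rightarrow> nat set set" where
  "K_E n = {{i, n + j} | i j. i < n \<and> j < n}"

end

theory Submission imports Defs begin
lemma five: "{i::nat. i < 5} = {0,1,2,3,4}" by auto
lemma HE: "H_E = {{0,1},{1,2},{2,3},{3,4},{4,0},{0,5}}"
proof -
  have h: "{{i, (i + 1) mod 5} | i. i < (5::nat)} = (\<lambda>i. {i, (i + 1) mod 5}) ` {i. i < 5}" by blast
  show ?thesis unfolding H_E_def h five by (simp add: insert_commute numeral_2_eq_2)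
qed
lemma inc_insert: "incidences (insert {a,b} E) = insert (a,{a,b}) (insert (b,{b,a}) (incidences E))"
  unfolding incidences_def by (auto simp: insert_commute)
lemma inc_empty: "incidences {} = {}" unfolding incidences_def by auto
lemma inc_adj_pair: "u \<noteq> w \<Longrightarrow> x \<noteq> y \<Longrightarrow>
   inc_adj (u,{u,w}) (x,{x,y}) \<longleftrightarrow> u = x \<or> w = x \<or> u = y"
  unfolding inc_adj_def by (auto simp: doubleton_eq_iff)
lemma pair_neq: "u \<noteq> w \<Longrightarrow> x \<noteq> y \<Longrightarrow>
   (u,{u,w}) \<noteq> (x,{x,y}) \<longleftrightarrow> u \<noteq> x \<or> w \<noteq> y"
  by (auto simp: doubleton_eq_iff)
lemma sum_pair: "u \<noteq> (w::nat) \<Longrightarrow> \<Sum>{u,w} - u = w" by simp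
definition gH :: "nat \<Rightarrow> nat \<Rightarrow> nat" where
 "gH u w = (if (u,w) = (0,1) then 0 else if (u,w) = (1,0) then 1 else if (u,w) = (1,2) then 2 else if (u,w) = (2,1) then 0 else if (u,w) = (2,3) then 1 else if (u,w) = (3,2) then 2 else if (u,w) = (3,4) then 0 else if (u,w) = (4,3) then 3 else if (u,w) = (4,0) then 1 else if (u,w) = (0,4) then 2 else if (u,w) = (0,5) then 3 else if (u,w) = (5,0) then 1 else 0)"
definition cH :: "nat \<times> nat set \<Rightarrow> nat" where
 "cH a = (case a of (u,e) \<Rightarrow> gH u (\<Sum>e - u))"
lemma cH_pair: "u \<noteq> w \<Longrightarrow> cH (u,{u,w}) = gH u w" by (simp add: cH_def sum_pair)
lemma HI: "incidences H_E = {(0,{0,1}),(1,{1,0}),(1,{1,2}),(2,{2,1}),(2,{2,3}),(3,{3,2}),(3,{3,4}),(4,{4,3}),(4,{4,0}),(0,{0,4}),(0,{0,5}),(5,{5,0})}"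
  unfolding HE inc_insert inc_empty by simp
lemma cH_col: "incidence_coloring H_E cH"
  unfolding incidence_coloring_def HI
  apply (simp only: ball_simps)
  apply (simp add: inc_adj_pair cH_pair pair_neq gH_def)
  done
lemma S1_same:
  assumes "finite (S1 E c v)" "card (S1 E c v) \<le> 1" "{x,v} \<in> E" "{y,v} \<in> E"
  shows "c (x,{x,v}) = c (y,{y,v})"
proof -
  have "c (x,{x,v}) \<in> S1 E c v" "c (y,{y,v}) \<in> S1 E c v" using assms(3,4) unfolding S1_def by blast+
  thus ?thesis using assms(1,2) card_le_Suc0_iff_eq[OF assms(1)] by auto
qed
lemma inc_mem: "{u,w} \<in> E \<Longrightarrow> (u,{u,w}) \<in> incidences E" unfolding incidences_def by auto
lemma S1_sub: "S1 E c v \<subseteq> c ` incidences E"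
  unfolding S1_def using inc_mem by fastforce
lemma fin_inc: "finite E \<Longrightarrow> (\<forall>e\<in>E. finite e) \<Longrightarrow> finite (incidences E)"
  by (rule finite_subset[of _ "(\<Union>E) \<times> E"]) (auto simp: incidences_def)
lemma ic_diff: "incidence_coloring E c \<Longrightarrow> a\<in>incidences E \<Longrightarrow> b\<in>incidences E \<Longrightarrow> a\<noteq>b \<Longrightarrow> inc_adj a b \<Longrightarrow> c a \<noteq> c b"
  unfolding incidence_coloring_def by blast
lemma inc_form: "\<forall>e\<in>E. \<exists>x y. x\<noteq>y \<and> e={x,y} \<Longrightarrow> a \<in> incidences E \<Longrightarrow> \<exists>u w. u\<noteq>w \<and> a=(u,{u,w}) \<and> {u,w}\<in>E"
proof -
  assume F: "\<forall>e\<in>E. \<exists>x y. x\<noteq>y \<and> e={x,y}" and a: "a \<in> incidences E"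
  obtain v e where ve: "a = (v,e)" "e \<in> E" "v \<in> e" using a unfolding incidences_def by blast
  obtain x y where xy: "x\<noteq>y" "e = {x,y}" using F ve(2) by blast
  show ?thesis
  proof (cases "v = x")
    case True thus ?thesis using ve xy by (intro exI[of _ x] exI[of _ y]) simp
  next
    case False
    hence "v = y" "e = {y,x}" using ve xy by (auto simp: insert_commute)
    thus ?thesis using ve xy by (intro exI[of _ y] exI[of _ x]) simp
  qed
qed
lemma target_ic:
  assumes "\<forall>e\<in>E. \<exists>x y. x\<noteq>y \<and> e={x,y}"
  shows "incidence_coloring E (\<lambda>(u,e). \<Sum>e - (u::nat))"
  unfolding incidence_coloring_def
proof (intro ballI impI)
  fix a b assume a: "a \<in> incidences E" and b: "b \<in> incidences E" and ab: "a \<noteq> b \<and> inc_adj a b"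
  obtain u w where uw: "u\<noteq>w" "a=(u,{u,w})" using inc_form[OF assms a] by blast
  obtain x y where xy: "x\<noteq>y" "b=(x,{x,y})" using inc_form[OF assms b] by blast
  show "(case a of (u, e) \<Rightarrow> \<Sum> e - u) \<noteq> (case b of (u, e) \<Rightarrow> \<Sum> e - u)"
  proof -
    have h1: "(u,{u,w}) \<noteq> (x,{x,y})" "inc_adj (u,{u,w}) (x,{x,y})" using ab uw xy by simp_all
    have "u \<noteq> x \<or> w \<noteq> y" using h1(1) pair_neq[OF uw(1) xy(1)] by simp
    moreover have "u = x \<or> w = x \<or> u = y" using h1(2) inc_adj_pair[OF uw(1) xy(1)] by simp
    ultimately have "w \<noteq> y" using uw xy by auto
    thus ?thesis using uw xy by (simp add: sum_pair)
  qed
qed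
lemma edge_neq: "\<forall>e\<in>E. \<exists>x y. x\<noteq>y \<and> e={x,y} \<Longrightarrow> {u,v} \<in> E \<Longrightarrow> u \<noteq> v"
proof -
  assume F: "\<forall>e\<in>E. \<exists>x y. x\<noteq>y \<and> e={x,y}" and e: "{u,v} \<in> E"
  obtain x y where "x\<noteq>y" "{u,v} = {x,y}" using F e by blast
  thus ?thesis by (auto simp: doubleton_eq_iff)
qed

lemma K_form: "\<forall>e\<in>K_E n. \<exists>x y. x\<noteq>y \<and> e={x,y}"
proof
  fix e assume "e \<in> K_E n"
  then obtain i j where "e = {i, n+j}" "i<n" unfolding K_E_def by blast
  thus "\<exists>x y. x\<noteq>y \<and> e={x,y}" by (intro exI[of _ i] exI[of _ "n+j"]) simp
qed
lemma K_fin: "finite (K_E n)"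
proof -
  have "K_E n = (\<lambda>(i,j). {i,n+j}) ` ({..<n}\<times>{..<n})" unfolding K_E_def by auto
  thus ?thesis by simp
qed
lemma K_fin_inc: "finite (incidences (K_E n))"
  using fin_inc[OF K_fin] K_form by fastforce
lemma K_edge: "i<n \<Longrightarrow> n\<le>y \<Longrightarrow> y<2*n \<Longrightarrow> {i,y} \<in> K_E n \<and> {y,i} \<in> K_E n"
proof -
  assume a: "i<n" "n\<le>y" "y<2*n"
  have "{i,y} = {i, n+(y-n)}" "{y,i} = {i, n+(y-n)}" using a by (auto simp: insert_commute)
  moreover have "y - n < n" using a by linarith
  ultimately show ?thesis unfolding K_E_def using a(1) by blast
qed

lemma K_upper: "kp_incidence_coloring (K_V n) (K_E n) (2*n) 1 (\<lambda>(u,e). \<Sum>e - u)"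
  unfolding kp_incidence_coloring_def
proof (intro conjI ballI)
  show "incidence_coloring (K_E n) (\<lambda>(u,e). \<Sum>e - u)" by (rule target_ic[OF K_form])
  have "(\<lambda>(u,e). \<Sum>e - u) ` incidences (K_E n) \<subseteq> {0..<2*n}"
  proof
    fix z assume "z \<in> (\<lambda>(u,e). \<Sum>e - u) ` incidences (K_E n)"
    then obtain a where a: "a \<in> incidences (K_E n)" "z = (\<lambda>(u,e). \<Sum>e - u) a" by blast
    then obtain u w where uw: "u\<noteq>w" "a=(u,{u,w})" "{u,w} \<in> K_E n" using inc_form[OF K_form] by blast
    obtain i j where ij: "{u,w} = {i,n+j}" "i<n" "j<n" using uw(3) unfolding K_E_def by blast
    hence "w = i \<or> w = n+j" by (auto simp: doubleton_eq_iff)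
    hence "w < 2*n" using ij by linarith
    thus "z \<in> {0..<2*n}" using a uw by (simp add: sum_pair)
  qed
  hence "card ((\<lambda>(u,e). \<Sum>e - u) ` incidences (K_E n)) \<le> card {0..<2*n}"
    by (intro card_mono) simp_all
  thus "card ((\<lambda>(u,e). \<Sum>e - u) ` incidences (K_E n)) \<le> 2*n" by simp
  fix v
  have "S1 (K_E n) (\<lambda>(u,e). \<Sum>e - u) v \<subseteq> {v}"
  proof
    fix z assume "z \<in> S1 (K_E n) (\<lambda>(u,e). \<Sum>e - u) v"
    then obtain u where u: "z = \<Sum>{u,v} - u" "{u,v} \<in> K_E n" unfolding S1_def by auto
    have "u \<noteq> v" by (rule edge_neq[OF K_form u(2)])
    thus "z \<in> {v}" using u by (simp add: sum_pair)
  qed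
  hence "card (S1 (K_E n) (\<lambda>(u,e). \<Sum>e - u) v) \<le> card {v}"
    by (intro card_mono) simp_all
  thus "card (S1 (K_E n) (\<lambda>(u,e). \<Sum>e - u) v) \<le> 1" by simp
qed

lemma K_lower:
  assumes n: "n \<ge> 1" and kp: "kp_incidence_coloring (K_V n) (K_E n) k 1 c"
  shows "2*n \<le> k"
proof -
  have ic: "incidence_coloring (K_E n) c" and ck: "card (c ` incidences (K_E n)) \<le> k"
    and s1: "\<And>v. v \<in> K_V n \<Longrightarrow> card (S1 (K_E n) c v) \<le> 1"
    using kp unfolding kp_incidence_coloring_def by blast+
  have fs: "finite (S1 (K_E n) c v)" for v
    by (rule finite_subset[OF S1_sub[of "K_E n" c v]]) (rule finite_imageI[OF K_fin_inc])
  define b where "b x = (if x < n then c (n,{n,x}) else c (0,{0,x}))" for x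
  have sub: "b ` {0..<2*n} \<subseteq> c ` incidences (K_E n)"
  proof
    fix z assume "z \<in> b ` {0..<2*n}"
    then obtain x where x0: "x \<in> {0..<2*n}" and zx: "z = b x" by (rule imageE)
    have x: "x < 2*n" "z = b x" using x0 zx by auto
    show "z \<in> c ` incidences (K_E n)"
    proof (cases "x < n")
      case True
      have e: "{x,n} \<in> K_E n \<and> {n,x} \<in> K_E n" using K_edge[of x n n] True n by linarith
      have zq: "z = c (n,{n,x})" using x True b_def by simp
      have "(n,{n,x}) \<in> incidences (K_E n)" by (rule inc_mem[OF conjunct2[OF e]])
      thus ?thesis using zq by (rule rev_image_eqI)
    next
      case False
      have e: "{0,x} \<in> K_E n \<and> {x,0} \<in> K_E n" using K_edge[of 0 n x] False n x by linarith
      have zq: "z = c (0,{0,x})" using x False b_def by simp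
      have "(0,{0,x}) \<in> incidences (K_E n)" by (rule inc_mem[OF conjunct1[OF e]])
      thus ?thesis using zq by (rule rev_image_eqI)
    qed
  qed
  have key: "b x \<noteq> b y" if x: "x < 2*n" and y: "y<2*n" and ne: "x\<noteq>y" and le: "x < n \<or> n \<le> y" for x y
  proof -
    consider "x<n" "y<n" | "n\<le>x" "n\<le>y" | "x<n" "n\<le>y" using le by linarith
    then show ?thesis
    proof cases
      case 1
      have e1: "{n,x} \<in> K_E n" "{n,y} \<in> K_E n" using K_edge[of x n n] K_edge[of y n n] 1 n by auto
      have nx: "n \<noteq> x" "n \<noteq> y" using 1 by auto
      have "c (n,{n,x}) \<noteq> c (n,{n,y})"
        by (rule ic_diff[OF ic inc_mem[OF e1(1)] inc_mem[OF e1(2)]])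
           (insert nx ne, auto simp: inc_adj_pair[OF nx] doubleton_eq_iff)
      thus ?thesis using 1 b_def by simp
    next
      case 2
      have e1: "{0,x} \<in> K_E n" "{0,y} \<in> K_E n" using K_edge[of 0 n x] K_edge[of 0 n y] 2 n x y by auto
      have nx: "0 \<noteq> x" "0 \<noteq> y" using 2 n by auto
      have "c (0,{0,x}) \<noteq> c (0,{0,y})"
        by (rule ic_diff[OF ic inc_mem[OF e1(1)] inc_mem[OF e1(2)]])
           (insert nx ne, auto simp: inc_adj_pair[OF nx] doubleton_eq_iff)
      thus ?thesis using 2 b_def by simp
    next
      case 3
      have e0: "{n,x} \<in> K_E n" using K_edge[of x n n] 3 n by auto
      have e1: "{x,y} \<in> K_E n \<and> {y,x} \<in> K_E n" using K_edge[of x n y] 3 y by simp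
      have e2: "{0,y} \<in> K_E n" using K_edge[of 0 n y] 3 y n by simp
      have xK: "x \<in> K_V n" and yK: "y \<in> K_V n" using x y unfolding K_V_def by auto
      have q1: "c (n,{n,x}) = c (y,{y,x})" by (rule S1_same[OF fs s1[OF xK] e0 conjunct2[OF e1]])
      have q2: "c (0,{0,y}) = c (x,{x,y})" by (rule S1_same[OF fs s1[OF yK] e2 conjunct1[OF e1]])
      have nx: "y \<noteq> x" "x \<noteq> y" using ne by auto
      have "c (y,{y,x}) \<noteq> c (x,{x,y})"
        by (rule ic_diff[OF ic inc_mem[OF conjunct2[OF e1]] inc_mem[OF conjunct1[OF e1]]])
           (insert nx, simp_all add: pair_neq[OF nx] inc_adj_pair[OF nx])
      thus ?thesis using 3 b_def q1 q2 by simp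
    qed
  qed
  have inj: "inj_on b {0..<2*n}"
  proof (rule inj_onI, rule ccontr)
    fix x y assume x: "x \<in> {0..<2*n}" and y: "y \<in> {0..<2*n}" and eq: "b x = b y" and ne: "x \<noteq> y"
    show False
    proof (cases "x < n \<or> n \<le> y")
      case True thus False using key[of x y] x y eq ne by auto
    next
      case False thus False using key[of y x] x y eq ne by auto
    qed
  qed
  have "2*n = card (b ` {0..<2*n})" using card_image[OF inj] by simp
  also have "\<dots> \<le> card (c ` incidences (K_E n))" by (rule card_mono[OF _ sub]) (simp add: K_fin_inc)
  finally show ?thesis using ck by linarith
qed

lemma K_main: "n \<ge> 1 \<Longrightarrow> chi_ip (K_V n) (K_E n) 1 = 2 * n"
  unfolding chi_ip_def
  by (rule Least_equality) (use K_upper K_lower in blast)+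

lemma gdiff: "incidence_coloring E c \<Longrightarrow> (u,{u,w}) \<in> incidences E \<Longrightarrow> (x,{x,y}) \<in> incidences E
  \<Longrightarrow> u\<noteq>w \<Longrightarrow> x\<noteq>y \<Longrightarrow> u\<noteq>x \<or> w\<noteq>y \<Longrightarrow> u=x \<or> w=x \<or> u=y \<Longrightarrow> c(u,{u,w}) \<noteq> c(x,{x,y})"
proof -
  assume a: "incidence_coloring E c" "(u,{u,w}) \<in> incidences E" "(x,{x,y}) \<in> incidences E"
    "u\<noteq>w" "x\<noteq>y" "u\<noteq>x \<or> w\<noteq>y" "u=x \<or> w=x \<or> u=y"
  have 1: "(u,{u,w}) \<noteq> (x,{x,y})" using pair_neq[OF a(4,5)] a(6) by blast
  have 2: "inc_adj (u,{u,w}) (x,{x,y})" using inc_adj_pair[OF a(4,5)] a(7) by blast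
  show ?thesis by (rule ic_diff[OF a(1-3) 1 2])
qed
lemma H_fin_inc: "finite (incidences H_E)" by (simp add: HI)
lemma ex2: "(x::nat)\<noteq>y \<Longrightarrow> \<exists>a b. a\<noteq>b \<and> {x,y}={a,b}" by blast
lemma H_form: "\<forall>e\<in>H_E. \<exists>x y. x\<noteq>y \<and> e={x,y}"
  unfolding HE by (simp add: ex2)
lemma H_lower4:
  assumes ic: "incidence_coloring H_E c"
  shows "4 \<le> card (c ` incidences H_E)"
proof -
  have d: "c (0,{0,1}) \<noteq> c (0,{0,4})" "c (0,{0,1}) \<noteq> c (0,{0,5})" "c (0,{0,1}) \<noteq> c (1,{1,0})"
    "c (0,{0,4}) \<noteq> c (0,{0,5})" "c (0,{0,4}) \<noteq> c (1,{1,0})" "c (0,{0,5}) \<noteq> c (1,{1,0})"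
    by (rule gdiff[OF ic]; simp add: HI doubleton_eq_iff)+
  have "{c (0,{0,1}), c (0,{0,4}), c (0,{0,5}), c (1,{1,0})} \<subseteq> c ` incidences H_E"
    by (simp add: HI)
  hence "card {c (0,{0,1}), c (0,{0,4}), c (0,{0,5}), c (1,{1,0})} \<le> card (c ` incidences H_E)"
    by (rule card_mono[OF finite_imageI[OF H_fin_inc]])
  thus ?thesis using d by simp
qed
lemma H_lower5:
  assumes kp: "kp_incidence_coloring H_V H_E k 1 c"
  shows "5 \<le> k"
proof -
  have ic: "incidence_coloring H_E c" and ck: "card (c ` incidences H_E) \<le> k"
    and s1: "\<And>v. v \<in> H_V \<Longrightarrow> card (S1 H_E c v) \<le> 1"
    using kp unfolding kp_incidence_coloring_def by blast+
  have fs: "finite (S1 H_E c v)" for v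
    by (rule finite_subset[OF S1_sub[of H_E c v]]) (rule finite_imageI[OF H_fin_inc])
  have q0: "c (4,{4,0}) = c (1,{1,0})" by (rule S1_same[OF fs s1]; simp add: H_V_def HE doubleton_eq_iff)
  have q1: "c (0,{0,1}) = c (2,{2,1})" by (rule S1_same[OF fs s1]; simp add: H_V_def HE doubleton_eq_iff)
  have q2: "c (1,{1,2}) = c (3,{3,2})" by (rule S1_same[OF fs s1]; simp add: H_V_def HE doubleton_eq_iff)
  have q3: "c (2,{2,3}) = c (4,{4,3})" by (rule S1_same[OF fs s1]; simp add: H_V_def HE doubleton_eq_iff)
  have q4: "c (3,{3,4}) = c (0,{0,4})" by (rule S1_same[OF fs s1]; simp add: H_V_def HE doubleton_eq_iff)
  have d: "c (1,{1,0}) \<noteq> c (0,{0,1})" "c (1,{1,0}) \<noteq> c (1,{1,2})" "c (4,{4,0}) \<noteq> c (4,{4,3})"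
    "c (4,{4,0}) \<noteq> c (0,{0,4})" "c (2,{2,1}) \<noteq> c (1,{1,2})" "c (2,{2,1}) \<noteq> c (2,{2,3})"
    "c (0,{0,1}) \<noteq> c (0,{0,4})" "c (3,{3,2}) \<noteq> c (2,{2,3})" "c (3,{3,2}) \<noteq> c (3,{3,4})"
    "c (4,{4,3}) \<noteq> c (3,{3,4})"
    by (rule gdiff[OF ic]; simp add: HI doubleton_eq_iff)+
  have "{c (1,{1,0}), c (0,{0,1}), c (1,{1,2}), c (2,{2,3}), c (3,{3,4})} \<subseteq> c ` incidences H_E"
    by (simp add: HI)
  hence "card {c (1,{1,0}), c (0,{0,1}), c (1,{1,2}), c (2,{2,3}), c (3,{3,4})} \<le> card (c ` incidences H_E)"
    by (rule card_mono[OF finite_imageI[OF H_fin_inc]])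
  moreover have "card {c (1,{1,0}), c (0,{0,1}), c (1,{1,2}), c (2,{2,3}), c (3,{3,4})} = 5"
    using d q0 q1 q2 q3 q4 by simp
  ultimately show ?thesis using ck by linarith
qed

lemma cH_card: "card (cH ` incidences H_E) \<le> 4"
proof -
  have "cH ` incidences H_E \<subseteq> {0,1,2,3}" by (simp add: HI cH_pair gH_def)
  hence "card (cH ` incidences H_E) \<le> card {0,1,2,3::nat}" by (rule card_mono[rotated]) simp
  thus ?thesis by simp
qed
lemma card_le2: "A \<subseteq> {a,b} \<Longrightarrow> card A \<le> 2"
  using card_mono[of "{a,b}" A] card_insert_le[of "{b}" a] by (simp add: card_insert_if split: if_splits)
lemma H_V_cases: "v \<in> H_V \<Longrightarrow> v = 0 \<or> v = 1 \<or> v = 2 \<or> v = 3 \<or> v = 4 \<or> v = (5::nat)"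
  unfolding H_V_def by auto
lemma cH_S1: "v \<in> H_V \<Longrightarrow> card (S1 H_E cH v) \<le> 2"
proof -
  assume "v \<in> H_V"
  hence "v = 0 \<or> v = 1 \<or> v = 2 \<or> v = 3 \<or> v = 4 \<or> v = 5" by (rule H_V_cases)
  moreover have "S1 H_E cH 0 \<subseteq> {1,1}" unfolding S1_def HE by (auto simp: doubleton_eq_iff cH_pair gH_def)
  moreover have "S1 H_E cH 1 \<subseteq> {0,0}" unfolding S1_def HE by (auto simp: doubleton_eq_iff cH_pair gH_def)
  moreover have "S1 H_E cH 2 \<subseteq> {2,2}" unfolding S1_def HE by (auto simp: doubleton_eq_iff cH_pair gH_def)
  moreover have "S1 H_E cH 3 \<subseteq> {1,3}" unfolding S1_def HE by (auto simp: doubleton_eq_iff cH_pair gH_def)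
  moreover have "S1 H_E cH 4 \<subseteq> {0,2}" unfolding S1_def HE by (auto simp: doubleton_eq_iff cH_pair gH_def)
  moreover have "S1 H_E cH 5 \<subseteq> {3,3}" unfolding S1_def HE by (auto simp: doubleton_eq_iff cH_pair gH_def)
  ultimately show ?thesis using card_le2 by metis
qed
lemma cH_kp: "kp_incidence_coloring H_V H_E 4 2 cH"
  unfolding kp_incidence_coloring_def using cH_col cH_card cH_S1 by blast

definition f5 :: "nat \<Rightarrow> nat" where "f5 w = (if w = 5 then 2 else w)"
definition c5 :: "nat \<times> nat set \<Rightarrow> nat" where "c5 a = (case a of (u,e) \<Rightarrow> f5 (\<Sum>e - u))"
lemma c5_pair: "u \<noteq> w \<Longrightarrow> c5 (u,{u,w}) = f5 w" by (simp add: c5_def sum_pair)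
lemma c5_col: "incidence_coloring H_E c5"
  unfolding incidence_coloring_def HI
  apply (simp only: ball_simps)
  apply (simp add: inc_adj_pair c5_pair pair_neq f5_def)
  done
lemma c5_kp: "kp_incidence_coloring H_V H_E 5 1 c5"
  unfolding kp_incidence_coloring_def
proof (intro conjI ballI)
  show "incidence_coloring H_E c5" by (rule c5_col)
  have "c5 ` incidences H_E \<subseteq> {0,1,2,3,4}" by (simp add: HI c5_pair f5_def)
  hence "card (c5 ` incidences H_E) \<le> card {0,1,2,3,4::nat}" by (rule card_mono[rotated]) simp
  thus "card (c5 ` incidences H_E) \<le> 5" by simp
  fix v
  have "S1 H_E c5 v \<subseteq> {f5 v}"
  proof
    fix z assume "z \<in> S1 H_E c5 v"
    then obtain u where u: "z = c5 (u,{u,v})" "{u,v} \<in> H_E" unfolding S1_def by auto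
    have "u \<noteq> v" by (rule edge_neq[OF H_form u(2)])
    thus "z \<in> {f5 v}" using u by (simp add: c5_pair)
  qed
  hence "card (S1 H_E c5 v) \<le> card {f5 v}" by (intro card_mono) simp_all
  thus "card (S1 H_E c5 v) \<le> 1" by simp
qed

lemma H_main: "chi_i H_E = 4 \<and> chi_ip H_V H_E 2 = 4 \<and> chi_ip H_V H_E 1 = 5"
proof (intro conjI)
  show "chi_i H_E = 4" unfolding chi_i_def
  proof (rule Least_equality)
    show "\<exists>c. incidence_coloring H_E c \<and> card (c ` incidences H_E) \<le> 4" using cH_col cH_card by blast
    fix y assume "\<exists>c. incidence_coloring H_E c \<and> card (c ` incidences H_E) \<le> y"
    thus "4 \<le> y" using H_lower4 by force
  qed
  show "chi_ip H_V H_E 2 = 4" unfolding chi_ip_def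
  proof (rule Least_equality)
    show "\<exists>c. kp_incidence_coloring H_V H_E 4 2 c" using cH_kp by blast
    fix y assume "\<exists>c. kp_incidence_coloring H_V H_E y 2 c"
    then obtain c where "kp_incidence_coloring H_V H_E y 2 c" by blast
    hence "incidence_coloring H_E c" "card (c ` incidences H_E) \<le> y" unfolding kp_incidence_coloring_def by blast+
    thus "4 \<le> y" using H_lower4 by force
  qed
  show "chi_ip H_V H_E 1 = 5" unfolding chi_ip_def
  proof (rule Least_equality)
    show "\<exists>c. kp_incidence_coloring H_V H_E 5 1 c" using c5_kp by blast
    fix y assume "\<exists>c. kp_incidence_coloring H_V H_E y 1 c"
    thus "5 \<le> y" using H_lower5 by blast
  qed
qed

theorem mainTheorem13:
  shows "(chi_i H_E = 4 \<and> chi_ip H_V H_E 2 = 4 \<and> chi_ip H_V H_E 1 = 5) \<and>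
         (\<forall>n::nat. n \<ge> 1 \<longrightarrow> chi_ip (K_V n) (K_E n) 1 = 2 * n)"
  using H_main K_main by blast

end
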